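(* For any subset $L\subset G$ we have $L^\#=L^{\#\#}+L^\bullet$ as ideals of $\kappa G^\#$.
   Context: Let $\kappa$ be a field of characteristic $0$. For a group $G$, let $*:\kappa G\to\kappa G$ be the $\kappa$-linear map with $g^*=g^{-1}$ for $g\in G$, and $(\kappa G)^*$ its fixed points. $A_G$ is the quotient of $\kappa G$ by the two-sided ideal generated by all $ab-ba$ with $a\in\kappa G$, $b\in(\kappa G)^*$; $*$ descends to $A_G$, and $\kappa G^\#=\{x\in A_G:x^*=x\}$ (a commutative subring of the centre of $A_G$). Group elements are identified with their images in $A_G$, and $\bar x=\tfrac12(x+x^* )$ for $x\in A_G$. For $L\subset G$: $L^\#$ is the ideal of $\kappa G^\#$ generated by $\{\overline{xl}-\bar x: x\in A_G, l\in L\}$; $L^{\#\#}$ is the ideal generated by $\{\overline{xl}-\overline{xl^{-1}}: x\in A_G, l\in L\}$; $L^\bullet$ is the ideal generated by $\{1-\bar l: l\in L\}$. *)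

theory Defs
  imports "HOL-Algebra.QuotRing"
begin

text \<open>The group algebra kG of a group G (written additively via the type class group_add,
  which need not be commutative) over a field k, as finitely supported functions G -> k
  with convolution product.\<close>

definition gsupp :: "('g \<Rightarrow> 'k::zero) \<Rightarrow> 'g set" where
  "gsupp f = {g. f g \<noteq> 0}"

definition conv :: "('g::group_add \<Rightarrow> 'k::field) \<Rightarrow> ('g \<Rightarrow> 'k) \<Rightarrow> 'g \<Rightarrow> 'k" where
  "conv f h x = (\<Sum>y\<in>gsupp f. f y * h (- y + x))"

definition delta :: "'g::group_add \<Rightarrow> 'g \<Rightarrow> 'k::field" where
  "delta g = (\<lambda>x. if x = g then 1 else 0)"

definition grpalg :: "('g::group_add \<Rightarrow> 'k::field) ring" where
  "grpalg = \<lparr> carrier = {f. finite (gsupp f)},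
              mult = conv,
              one = delta 0,
              zero = (\<lambda>_. 0),
              add = (\<lambda>f h x. f x + h x) \<rparr>"

definition star :: "('g::group_add \<Rightarrow> 'k) \<Rightarrow> 'g \<Rightarrow> 'k" where
  "star f = (\<lambda>g. f (- g))"

definition commIdeal :: "('g::group_add \<Rightarrow> 'k::field) set" where
  "commIdeal = genideal grpalg
     {a \<otimes>\<^bsub>grpalg\<^esub> b \<ominus>\<^bsub>grpalg\<^esub> b \<otimes>\<^bsub>grpalg\<^esub> a | a b.
        a \<in> carrier grpalg \<and> b \<in> carrier grpalg \<and> star b = b}"

definition AG :: "('g::group_add \<Rightarrow> 'k::field) set ring" where
  "AG = grpalg Quot commIdeal"

definition starA :: "('g::group_add \<Rightarrow> 'k) set \<Rightarrow> ('g \<Rightarrow> 'k) set" where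
  "starA X = star ` X"

definition grpA :: "'g::group_add \<Rightarrow> ('g \<Rightarrow> 'k::field) set" where
  "grpA g = commIdeal +>\<^bsub>grpalg\<^esub> delta g"

definition halfA :: "('g::group_add \<Rightarrow> 'k::field_char_0) set" where
  "halfA = commIdeal +>\<^bsub>grpalg\<^esub> (\<lambda>x. if x = 0 then 1/2 else 0)"

definition barA :: "('g::group_add \<Rightarrow> 'k::field_char_0) set \<Rightarrow> ('g \<Rightarrow> 'k) set" where
  "barA X = halfA \<otimes>\<^bsub>AG\<^esub> (X \<oplus>\<^bsub>AG\<^esub> starA X)"

definition sharpRing :: "('g::group_add \<Rightarrow> 'k::field) set ring" where
  "sharpRing = AG \<lparr> carrier := {X \<in> carrier AG. starA X = X} \<rparr>"

definition Lsharp :: "'g::group_add set \<Rightarrow> ('g \<Rightarrow> 'k::field_char_0) set set" where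
  "Lsharp L = genideal sharpRing
     {barA (x \<otimes>\<^bsub>AG\<^esub> grpA l) \<ominus>\<^bsub>AG\<^esub> barA x | x l. x \<in> carrier AG \<and> l \<in> L}"

definition Lsharpsharp :: "'g::group_add set \<Rightarrow> ('g \<Rightarrow> 'k::field_char_0) set set" where
  "Lsharpsharp L = genideal sharpRing
     {barA (x \<otimes>\<^bsub>AG\<^esub> grpA l) \<ominus>\<^bsub>AG\<^esub> barA (x \<otimes>\<^bsub>AG\<^esub> grpA (- l)) | x l.
        x \<in> carrier AG \<and> l \<in> L}"

definition Lbullet :: "'g::group_add set \<Rightarrow> ('g \<Rightarrow> 'k::field_char_0) set set" where
  "Lbullet L = genideal sharpRing
     {\<one>\<^bsub>AG\<^esub> \<ominus>\<^bsub>AG\<^esub> barA (grpA l) | l. l \<in> L}"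

end

theory Submission
  imports Defs "HOL-Algebra.Subrings"
begin

lemma grpalg_simps[simp]:
  "carrier grpalg = {f. finite (gsupp f)}"
  "mult grpalg = conv" "one grpalg = delta 0" "zero grpalg = (\<lambda>_. 0)"
  "add grpalg = (\<lambda>f h x. f x + h x)"
  by (simp_all add: grpalg_def)

lemma conv_superset:
  assumes "finite S" "gsupp f \<subseteq> S"
  shows "conv f h x = (\<Sum>y\<in>S. f y * h (- y + x))"
  unfolding conv_def
  by (rule sum.mono_neutral_left) (use assms in \<open>auto simp: gsupp_def\<close>)

lemma gsupp_conv: "gsupp (conv f h) \<subseteq> (\<lambda>(a,b). a + b) ` (gsupp f \<times> gsupp h)"
proof
  fix x assume "x \<in> gsupp (conv f h)"
  then have "(\<Sum>y\<in>gsupp f. f y * h (- y + x)) \<noteq> 0" by (simp add: gsupp_def conv_def)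
  then obtain y where "y \<in> gsupp f" "f y * h (- y + x) \<noteq> 0"
    by (meson sum.neutral)
  then have "y \<in> gsupp f" "- y + x \<in> gsupp h" by (auto simp: gsupp_def)
  moreover have "x = y + (- y + x)" by (simp add: add.assoc[symmetric])
  ultimately show "x \<in> (\<lambda>(a,b). a + b) ` (gsupp f \<times> gsupp h)" by force
qed

lemma finite_gsupp_conv: "finite (gsupp f) \<Longrightarrow> finite (gsupp h) \<Longrightarrow> finite (gsupp (conv f h))"
  by (rule finite_subset[OF gsupp_conv]) auto

lemma conv_assoc:
  fixes f h k :: "'g::group_add \<Rightarrow> 'k::field"
  assumes F: "finite (gsupp f)" and H: "finite (gsupp h)" and K: "finite (gsupp k)"
  shows "conv (conv f h) k x = conv f (conv h k) x"
proof -
  let ?S = "(\<lambda>(a,b). a + b) ` (gsupp f \<times> gsupp h)"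
  have S: "finite ?S" using F H by auto
  have inner: "(\<Sum>y\<in>?S. h (- a + y) * k (- y + x)) = (\<Sum>b\<in>gsupp h. h b * k (- b + - a + x))"
    if a: "a \<in> gsupp f" for a
  proof -
    have "(\<Sum>y\<in>?S. h (- a + y) * k (- y + x)) = (\<Sum>b\<in>(\<lambda>y. - a + y) ` ?S. h b * k (- b + - a + x))"
      by (subst sum.reindex) (auto simp: inj_on_def add.assoc[symmetric] minus_add)
    also have "\<dots> = (\<Sum>b\<in>gsupp h. h b * k (- b + - a + x))"
    proof (rule sum.mono_neutral_right)
      show "finite ((\<lambda>y. - a + y) ` ?S)" using S by simp
      show "gsupp h \<subseteq> (\<lambda>y. - a + y) ` ?S"
      proof
        fix b assume "b \<in> gsupp h"
        then have "a + b \<in> ?S" using a by force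
        moreover have "b = - a + (a + b)" by (simp add: add.assoc[symmetric])
        ultimately show "b \<in> (\<lambda>y. - a + y) ` ?S" by blast
      qed
    qed (auto simp: gsupp_def)
    finally show ?thesis .
  qed
  have "conv (conv f h) k x = (\<Sum>y\<in>?S. conv f h y * k (- y + x))"
    by (rule conv_superset[OF S gsupp_conv])
  also have "\<dots> = (\<Sum>y\<in>?S. \<Sum>a\<in>gsupp f. f a * (h (- a + y) * k (- y + x)))"
    by (simp add: conv_def sum_distrib_right mult.assoc)
  also have "\<dots> = (\<Sum>a\<in>gsupp f. f a * (\<Sum>y\<in>?S. h (- a + y) * k (- y + x)))"
    by (subst sum.swap) (simp add: sum_distrib_left)
  also have "\<dots> = (\<Sum>a\<in>gsupp f. f a * (\<Sum>b\<in>gsupp h. h b * k (- b + - a + x)))"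
    by (rule sum.cong) (simp_all add: inner)
  also have "\<dots> = conv f (conv h k) x"
    by (simp only: conv_def add.assoc)
  finally show ?thesis .
qed

lemma ring_grpalg: "ring (grpalg :: ('g::group_add \<Rightarrow> 'k::field) ring)"
proof (rule ringI)
  show "abelian_group (grpalg :: ('g::group_add \<Rightarrow> 'k::field) ring)"
  proof (rule abelian_groupI, simp_all)
    fix f h :: "'g \<Rightarrow> 'k" assume "finite (gsupp f)" "finite (gsupp h)"
    then show "finite (gsupp (\<lambda>x. f x + h x))"
      by (rule finite_subset[rotated, OF finite_UnI]) (auto simp: gsupp_def)
  next
    show "finite (gsupp (\<lambda>_. 0::'k))" by (simp add: gsupp_def)
  next
    fix f h k :: "'g \<Rightarrow> 'k" show "(\<lambda>x. f x + h x + k x) = (\<lambda>x. f x + (h x + k x))"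
      by (simp add: add.assoc)
  next
    fix f h :: "'g \<Rightarrow> 'k" show "(\<lambda>x. f x + h x) = (\<lambda>x. h x + f x)"
      by (simp add: add.commute)
  next
    fix f :: "'g \<Rightarrow> 'k" assume "finite (gsupp f)"
    then show "\<exists>y. finite (gsupp y) \<and> (\<lambda>x. y x + f x) = (\<lambda>_. 0)"
      by (intro exI[of _ "\<lambda>x. - f x"]) (auto simp: gsupp_def)
  qed
next
  show "monoid (grpalg :: ('g::group_add \<Rightarrow> 'k::field) ring)"
  proof (rule monoidI, simp_all)
    fix f h :: "'g \<Rightarrow> 'k" assume "finite (gsupp f)" "finite (gsupp h)"
    then show "finite (gsupp (conv f h))" by (rule finite_gsupp_conv)
  next
    show "finite (gsupp (delta 0 :: 'g \<Rightarrow> 'k))"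
      by (rule finite_subset[of _ "{0}"]) (auto simp: gsupp_def delta_def)
  next
    fix f :: "'g \<Rightarrow> 'k" assume F: "finite (gsupp f)"
    have "gsupp (delta 0 :: 'g \<Rightarrow> 'k) = {0}" by (auto simp: gsupp_def delta_def)
    then show "conv (delta 0) f = f"
      by (simp add: conv_def delta_def fun_eq_iff)
    show "conv f (delta 0) = f"
    proof
      fix x
      have "conv f (delta 0) x = (\<Sum>y\<in>insert x (gsupp f). f y * delta 0 (- y + x))"
        by (rule conv_superset) (use F in auto)
      also have "\<dots> = (\<Sum>y\<in>insert x (gsupp f). if y = x then f y else 0)"
        by (rule sum.cong) (auto simp: delta_def neg_eq_iff_add_eq_0 add_eq_0_iff2 eq_neg_iff_add_eq_0[symmetric])
      also have "\<dots> = f x" using F by (simp add: sum.delta)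
      finally show "conv f (delta 0) x = f x" .
    qed
  next
    fix f h k :: "'g \<Rightarrow> 'k" assume "finite (gsupp f)" "finite (gsupp h)" "finite (gsupp k)"
    then show "conv (conv f h) k = conv f (conv h k)" by (simp add: fun_eq_iff conv_assoc)
  qed
next
  fix f h k :: "'g \<Rightarrow> 'k"
  assume F: "f \<in> carrier grpalg" and H: "h \<in> carrier grpalg" and K: "k \<in> carrier grpalg"
  show "(f \<oplus>\<^bsub>grpalg\<^esub> h) \<otimes>\<^bsub>grpalg\<^esub> k = f \<otimes>\<^bsub>grpalg\<^esub> k \<oplus>\<^bsub>grpalg\<^esub> h \<otimes>\<^bsub>grpalg\<^esub> k"
  proof (simp, rule ext)
    fix x
    have S: "finite (gsupp f \<union> gsupp h)" using F H by simp
    show "conv (\<lambda>x. f x + h x) k x = conv f k x + conv h k x"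
      by (subst (1 2 3) conv_superset[OF S]) (auto simp: gsupp_def sum.distrib distrib_right)
  qed
  show "k \<otimes>\<^bsub>grpalg\<^esub> (f \<oplus>\<^bsub>grpalg\<^esub> h) = k \<otimes>\<^bsub>grpalg\<^esub> f \<oplus>\<^bsub>grpalg\<^esub> k \<otimes>\<^bsub>grpalg\<^esub> h"
    by (simp add: fun_eq_iff conv_def sum.distrib distrib_left)
qed


interpretation GA: ring "grpalg :: ('g::group_add \<Rightarrow> 'k::field) ring" by (rule ring_grpalg)

lemma gsupp_add: fixes f h :: "'a \<Rightarrow> 'k::monoid_add" shows "gsupp (\<lambda>x. f x + h x) \<subseteq> gsupp f \<union> gsupp h"
  by (auto simp: gsupp_def)

lemma grpalg_minus:
  fixes f :: "'g::group_add \<Rightarrow> 'k::field"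
  assumes "f \<in> carrier grpalg" shows "\<ominus>\<^bsub>grpalg\<^esub> f = (\<lambda>x. - f x)"
proof (rule GA.minus_equality)
  have "gsupp (\<lambda>x. - f x) = gsupp f" by (auto simp: gsupp_def)
  then show "(\<lambda>x. - f x) \<in> carrier grpalg" using assms by simp
qed (use assms in \<open>simp_all add: fun_eq_iff\<close>)

lemma grpalg_diff:
  fixes f h :: "'g::group_add \<Rightarrow> 'k::field"
  assumes "f \<in> carrier grpalg" "h \<in> carrier grpalg"
  shows "f \<ominus>\<^bsub>grpalg\<^esub> h = (\<lambda>x. f x - h x)"
  using assms by (simp add: a_minus_def grpalg_minus)

lemma gsupp_star: "gsupp (star f) = uminus ` gsupp f"
  by (auto simp: gsupp_def star_def image_iff) (metis minus_minus)

lemma star_carrier: "f \<in> carrier grpalg \<Longrightarrow> star f \<in> carrier grpalg"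
  by (simp add: gsupp_star)

lemma star_apply: "star f x = f (- x)"
  by (simp add: star_def)

lemma star_star[simp]: "star (star f) = f"
  by (simp add: star_def)

lemma star_add: "star (\<lambda>x. f x + h x) = (\<lambda>x. star f x + star h x)"
  by (simp add: star_def)

lemma conv_double:
  fixes f h :: "'g::group_add \<Rightarrow> 'k::field"
  assumes "finite F" "gsupp f \<subseteq> F" "finite H" "gsupp h \<subseteq> H"
  shows "conv f h x = (\<Sum>a\<in>F. \<Sum>b\<in>H. if a + b = x then f a * h b else 0)"
proof -
  have "conv f h x = (\<Sum>a\<in>F. f a * h (- a + x))" by (rule conv_superset) (use assms in auto)
  also have "\<dots> = (\<Sum>a\<in>F. \<Sum>b\<in>H. if a + b = x then f a * h b else 0)"
  proof (rule sum.cong[OF refl])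
    fix a
    have eq: "(a + b = x) = (b = - a + x)" for b
      by (metis add.assoc add.left_inverse add_0 add_minus_cancel)
    have "(\<Sum>b\<in>H. if a + b = x then f a * h b else 0) = (\<Sum>b\<in>H. if b = - a + x then f a * h b else 0)"
      by (simp add: eq)
    also have "\<dots> = f a * h (- a + x)"
      using assms by (auto simp: sum.delta' gsupp_def)
    finally show "f a * h (- a + x) = (\<Sum>b\<in>H. if a + b = x then f a * h b else 0)" by simp
  qed
  finally show ?thesis .
qed

lemma star_conv:
  fixes f h :: "'g::group_add \<Rightarrow> 'k::field"
  assumes F: "finite (gsupp f)" and H: "finite (gsupp h)"
  shows "star (conv f h) = conv (star h) (star f)"
proof
  fix x
  have "star (conv f h) x = (\<Sum>a\<in>gsupp f. \<Sum>b\<in>gsupp h. if a + b = - x then f a * h b else 0)"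
    unfolding star_def by (rule conv_double) (use F H in auto)
  also have "\<dots> = (\<Sum>b\<in>gsupp h. \<Sum>a\<in>gsupp f. if a + b = - x then f a * h b else 0)"
    by (rule sum.swap)
  also have "\<dots> = (\<Sum>b\<in>gsupp h. \<Sum>a\<in>gsupp f. if - b + - a = x then h b * f a else 0)"
  proof -
    have "(a + b = - x) = (- b + - a = x)" for a b :: 'g
      by (metis minus_add minus_minus)
    then show ?thesis by (intro sum.cong refl) (simp add: mult.commute)
  qed
  also have "\<dots> = (\<Sum>b\<in>uminus ` gsupp h. \<Sum>a\<in>uminus ` gsupp f. if b + a = x then h (- b) * f (- a) else 0)"
    by (simp add: sum.reindex inj_on_def) (simp only: minus_minus)
  also have "\<dots> = conv (star h) (star f) x"
    unfolding star_apply[of h, symmetric] star_apply[of f, symmetric]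
    by (rule conv_double[symmetric]) (use F H in \<open>auto simp: gsupp_star\<close>)
  finally show "star (conv f h) x = conv (star h) (star f) x" .
qed

lemma star_mult:
  "f \<in> carrier grpalg \<Longrightarrow> h \<in> carrier grpalg \<Longrightarrow>
    star (f \<otimes>\<^bsub>grpalg\<^esub> h) = star h \<otimes>\<^bsub>grpalg\<^esub> star (f :: 'g::group_add \<Rightarrow> 'k::field)"
  by (simp add: star_conv)

lemma star_plus:
  "star (f \<oplus>\<^bsub>grpalg\<^esub> h) = star h \<oplus>\<^bsub>grpalg\<^esub> star (f :: 'g::group_add \<Rightarrow> 'k::field)"
  by (simp add: star_def add.commute)

lemma star_plus':
  "star (f \<oplus>\<^bsub>grpalg\<^esub> h) = star f \<oplus>\<^bsub>grpalg\<^esub> star (h :: 'g::group_add \<Rightarrow> 'k::field)"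
  by (simp add: star_def)

lemma star_uminus:
  "f \<in> carrier grpalg \<Longrightarrow> star (\<ominus>\<^bsub>grpalg\<^esub> f) = \<ominus>\<^bsub>grpalg\<^esub> star (f :: 'g::group_add \<Rightarrow> 'k::field)"
  using star_carrier[of f] by (simp add: grpalg_minus del: grpalg_simps) (simp add: star_def)

lemma star_minus:
  "f \<in> carrier grpalg \<Longrightarrow> h \<in> carrier grpalg \<Longrightarrow>
   star (f \<ominus>\<^bsub>grpalg\<^esub> h) = star f \<ominus>\<^bsub>grpalg\<^esub> star (h :: 'g::group_add \<Rightarrow> 'k::field)"
  by (simp add: a_minus_def star_plus' star_uminus del: grpalg_simps)

lemma star_zero: "star (\<zero>\<^bsub>grpalg\<^esub>) = (\<zero>\<^bsub>grpalg\<^esub> :: 'g::group_add \<Rightarrow> 'k::field)"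
  by (simp add: star_def)

lemma star_one: "star (\<one>\<^bsub>grpalg\<^esub>) = (\<one>\<^bsub>grpalg\<^esub> :: 'g::group_add \<Rightarrow> 'k::field)"
  by (simp add: star_def delta_def fun_eq_iff)

definition gens :: "('g::group_add \<Rightarrow> 'k::field) set" where
  "gens = {a \<otimes>\<^bsub>grpalg\<^esub> b \<ominus>\<^bsub>grpalg\<^esub> b \<otimes>\<^bsub>grpalg\<^esub> a | a b.
        a \<in> carrier grpalg \<and> b \<in> carrier grpalg \<and> star b = b}"

lemma gens_carrier: "gens \<subseteq> carrier grpalg"
  unfolding gens_def by (auto intro!: GA.minus_closed GA.m_closed simp del: grpalg_simps)

lemma commIdeal_ideal: "ideal (commIdeal :: ('g::group_add \<Rightarrow> 'k::field) set) grpalg"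
  unfolding commIdeal_def gens_def[symmetric] by (rule GA.genideal_ideal[OF gens_carrier])

lemma gens_in: "x \<in> gens \<Longrightarrow> x \<in> commIdeal"
  unfolding commIdeal_def gens_def[symmetric] using GA.genideal_self[OF gens_carrier] by blast


lemma star_commIdeal:
  fixes a :: "'g::group_add \<Rightarrow> 'k::field"
  assumes "a \<in> commIdeal" shows "star a \<in> commIdeal"
proof -
  interpret CI: ideal "commIdeal :: ('g \<Rightarrow> 'k) set" grpalg by (rule commIdeal_ideal)
  let ?J = "{a \<in> carrier grpalg. star a \<in> (commIdeal :: ('g \<Rightarrow> 'k) set)}"
  have "ideal ?J grpalg"
  proof (rule idealI[OF ring_grpalg])
    show "subgroup ?J (add_monoid grpalg)"
    proof (rule GA.add.subgroupI)
      show "?J \<subseteq> carrier grpalg" by blast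
      have "\<zero>\<^bsub>grpalg\<^esub> \<in> ?J" using CI.zero_closed by (simp add: star_def gsupp_def)
      then show "?J \<noteq> {}" by blast
    next
      fix a assume "a \<in> ?J" then show "\<ominus>\<^bsub>grpalg\<^esub> a \<in> ?J"
        by (simp only: mem_Collect_eq star_uminus) (auto intro: CI.a_inv_closed simp del: grpalg_simps)
    next
      fix a b assume "a \<in> ?J" "b \<in> ?J" then show "a \<oplus>\<^bsub>grpalg\<^esub> b \<in> ?J"
        by (simp only: mem_Collect_eq star_plus') (auto intro: CI.a_closed simp del: grpalg_simps)
    qed
  next
    fix a x :: "'g \<Rightarrow> 'k" assume "a \<in> ?J" "x \<in> carrier grpalg"
    then show "x \<otimes>\<^bsub>grpalg\<^esub> a \<in> ?J"
      by (simp only: mem_Collect_eq star_mult) (auto intro: CI.I_r_closed star_carrier simp del: grpalg_simps)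
  next
    fix a x :: "'g \<Rightarrow> 'k" assume "a \<in> ?J" "x \<in> carrier grpalg"
    then show "a \<otimes>\<^bsub>grpalg\<^esub> x \<in> ?J"
      by (simp only: mem_Collect_eq star_mult) (auto intro: CI.I_l_closed star_carrier simp del: grpalg_simps)
  qed
  moreover have "gens \<subseteq> ?J"
  proof
    fix g :: "'g \<Rightarrow> 'k" assume "g \<in> gens"
    then obtain a b where ab: "a \<in> carrier grpalg" "b \<in> carrier grpalg" "star b = b"
      and g: "g = a \<otimes>\<^bsub>grpalg\<^esub> b \<ominus>\<^bsub>grpalg\<^esub> b \<otimes>\<^bsub>grpalg\<^esub> a"
      unfolding gens_def by blast
    have sa: "star a \<in> carrier grpalg" using ab by (simp add: star_carrier del: grpalg_simps)
    have "star a \<otimes>\<^bsub>grpalg\<^esub> b \<ominus>\<^bsub>grpalg\<^esub> b \<otimes>\<^bsub>grpalg\<^esub> star a \<in> commIdeal"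
      by (rule gens_in) (unfold gens_def, use ab sa in blast)
    then have "\<ominus>\<^bsub>grpalg\<^esub> (star a \<otimes>\<^bsub>grpalg\<^esub> b \<ominus>\<^bsub>grpalg\<^esub> b \<otimes>\<^bsub>grpalg\<^esub> star a) \<in> commIdeal"
      by (rule additive_subgroup.a_inv_closed[OF ideal.axioms(1)[OF commIdeal_ideal]])
    moreover have "star g = \<ominus>\<^bsub>grpalg\<^esub> (star a \<otimes>\<^bsub>grpalg\<^esub> b \<ominus>\<^bsub>grpalg\<^esub> b \<otimes>\<^bsub>grpalg\<^esub> star a)"
    proof -
      have "star g = star (a \<otimes>\<^bsub>grpalg\<^esub> b) \<ominus>\<^bsub>grpalg\<^esub> star (b \<otimes>\<^bsub>grpalg\<^esub> a)"
        unfolding g by (rule star_minus) (use ab in \<open>simp_all del: grpalg_simps\<close>)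
      also have "\<dots> = b \<otimes>\<^bsub>grpalg\<^esub> star a \<ominus>\<^bsub>grpalg\<^esub> star a \<otimes>\<^bsub>grpalg\<^esub> b"
        using ab by (simp add: star_mult del: grpalg_simps)
      also have "\<dots> = \<ominus>\<^bsub>grpalg\<^esub> (star a \<otimes>\<^bsub>grpalg\<^esub> b \<ominus>\<^bsub>grpalg\<^esub> b \<otimes>\<^bsub>grpalg\<^esub> star a)"
        using ab sa by (simp add: GA.minus_add GA.minus_eq GA.a_comm del: grpalg_simps)
      finally show ?thesis .
    qed
    moreover have "g \<in> carrier grpalg" using g ab by (simp del: grpalg_simps)
    ultimately show "g \<in> ?J" by simp
  qed
  ultimately have "commIdeal \<subseteq> ?J"
    unfolding commIdeal_def gens_def[symmetric] by (rule GA.genideal_minimal)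
  then show ?thesis using assms by blast
qed


abbreviation pi :: "('g::group_add \<Rightarrow> 'k::field) \<Rightarrow> ('g \<Rightarrow> 'k) set" where
  "pi a \<equiv> commIdeal +>\<^bsub>grpalg\<^esub> a"

lemma ring_AG: "ring (AG :: ('g::group_add \<Rightarrow> 'k::field) set ring)"
  unfolding AG_def by (rule ideal.quotient_is_ring[OF commIdeal_ideal])

lemma pi_hom: "(pi :: ('g::group_add \<Rightarrow> 'k::field) \<Rightarrow> _) \<in> ring_hom grpalg AG"
  unfolding AG_def by (rule ideal.rcos_ring_hom[OF commIdeal_ideal])

lemma pi_carrier: "a \<in> carrier grpalg \<Longrightarrow> pi (a :: 'g::group_add \<Rightarrow> 'k::field) \<in> carrier AG"
  using ring_hom_closed[OF pi_hom] by blast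

lemma pi_add: "a \<in> carrier grpalg \<Longrightarrow> b \<in> carrier grpalg \<Longrightarrow>
  pi (a \<oplus>\<^bsub>grpalg\<^esub> b) = pi a \<oplus>\<^bsub>AG\<^esub> pi (b :: 'g::group_add \<Rightarrow> 'k::field)"
  using ring_hom_add[OF pi_hom] by blast

lemma pi_mult: "a \<in> carrier grpalg \<Longrightarrow> b \<in> carrier grpalg \<Longrightarrow>
  pi (a \<otimes>\<^bsub>grpalg\<^esub> b) = pi a \<otimes>\<^bsub>AG\<^esub> pi (b :: 'g::group_add \<Rightarrow> 'k::field)"
  using ring_hom_mult[OF pi_hom] by blast

lemma pi_one: "pi (\<one>\<^bsub>grpalg\<^esub>) = (\<one>\<^bsub>AG\<^esub> :: ('g::group_add \<Rightarrow> 'k::field) set)"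
  using ring_hom_one[OF pi_hom] by blast

lemma AG_carrierE:
  assumes "X \<in> carrier (AG :: ('g::group_add \<Rightarrow> 'k::field) set ring)"
  obtains a where "a \<in> carrier grpalg" "X = pi a"
  using assms unfolding AG_def FactRing_def A_RCOSETS_def RCOSETS_def a_r_coset_def
  by auto

lemma pi_eqI:
  fixes a b :: "'g::group_add \<Rightarrow> 'k::field"
  assumes "a \<in> carrier grpalg" "b \<in> carrier grpalg" "a \<ominus>\<^bsub>grpalg\<^esub> b \<in> commIdeal"
  shows "pi a = pi b"
proof -
  interpret CI: ideal "commIdeal :: ('g \<Rightarrow> 'k) set" grpalg by (rule commIdeal_ideal)
  have "a \<in> pi b"
    using CI.a_rcos_module_minus[OF ring_grpalg assms(2,1)] assms(3) by simp
  then show ?thesis using CI.a_repr_independence'[OF _ assms(2)] by simp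
qed

lemma pi_eqD:
  fixes a b :: "'g::group_add \<Rightarrow> 'k::field"
  assumes "a \<in> carrier grpalg" "b \<in> carrier grpalg" "pi a = pi b"
  shows "a \<ominus>\<^bsub>grpalg\<^esub> b \<in> commIdeal"
proof -
  interpret CI: ideal "commIdeal :: ('g \<Rightarrow> 'k) set" grpalg by (rule commIdeal_ideal)
  have "a \<in> pi b" using CI.a_rcos_self[OF assms(1)] assms(3) by simp
  then show ?thesis using CI.a_rcos_module_minus[OF ring_grpalg assms(2,1)] by simp
qed

lemma pi_alt: "pi a = (\<lambda>i. (\<lambda>x. i x + a x)) ` (commIdeal :: ('g::group_add \<Rightarrow> 'k::field) set)"
  by (auto simp: a_r_coset_def r_coset_def)

lemma star_image_commIdeal: "star ` commIdeal = (commIdeal :: ('g::group_add \<Rightarrow> 'k::field) set)"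
proof
  show "star ` commIdeal \<subseteq> (commIdeal :: ('g \<Rightarrow> 'k) set)" using star_commIdeal by blast
  show "(commIdeal :: ('g \<Rightarrow> 'k) set) \<subseteq> star ` commIdeal"
  proof
    fix i :: "'g \<Rightarrow> 'k" assume "i \<in> commIdeal"
    then have "star i \<in> commIdeal" by (rule star_commIdeal)
    then show "i \<in> star ` commIdeal" by (metis image_eqI star_star)
  qed
qed

lemma starA_pi:
  fixes a :: "'g::group_add \<Rightarrow> 'k::field"
  shows "starA (pi a) = pi (star a)"
proof -
  have "starA (pi a) = (\<lambda>i. (\<lambda>x. i x + star a x)) ` (star ` commIdeal)"
    unfolding starA_def pi_alt image_image by (simp add: star_def)
  then show ?thesis by (simp add: star_image_commIdeal pi_alt)
qed


definition sc :: "'k::field \<Rightarrow> 'g::group_add \<Rightarrow> 'k" where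
  "sc c = (\<lambda>x. if x = 0 then c else 0)"

lemma gsupp_sc: "gsupp (sc c) \<subseteq> {0}"
  by (auto simp: gsupp_def sc_def)

lemma sc_carrier: "sc c \<in> carrier grpalg"
  using finite_subset[OF gsupp_sc] by simp

lemma conv_sc: "conv (sc c) f = (\<lambda>x. c * f x)"
  by (rule ext, subst conv_superset[OF _ gsupp_sc]) (simp_all add: sc_def)

lemma star_sc: "star (sc c) = sc c"
  by (simp add: star_def sc_def fun_eq_iff)

lemma gsupp_delta: "gsupp (delta a :: 'g::group_add \<Rightarrow> 'k::field) = {a}"
  by (auto simp: gsupp_def delta_def)

lemma delta_carrier: "(delta a :: 'g::group_add \<Rightarrow> 'k::field) \<in> carrier grpalg"
  by (simp add: gsupp_delta)

lemma conv_delta: "conv (delta a) (delta b) = (delta (a + b) :: 'g::group_add \<Rightarrow> 'k::field)"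
proof
  fix x
  have "(- a + x = b) = (x = a + b)" by (metis add.assoc add_minus_cancel minus_add_cancel)
  then show "conv (delta a) (delta b) x = (delta (a + b) :: 'g \<Rightarrow> 'k) x"
    by (simp add: conv_def gsupp_delta) (simp add: delta_def)
qed

lemma star_delta: "star (delta a) = (delta (- a) :: 'g::group_add \<Rightarrow> 'k::field)"
  by (auto simp: star_def delta_def fun_eq_iff)

context
  fixes TY :: "'g::group_add \<Rightarrow> 'k::field_char_0"
begin

lemma starA_carrier: "X \<in> carrier (AG :: ('g \<Rightarrow> 'k) set ring) \<Longrightarrow> starA X \<in> carrier AG"
  by (erule AG_carrierE) (simp only: starA_pi pi_carrier star_carrier)

lemma starA_starA: "X \<in> carrier (AG :: ('g \<Rightarrow> 'k) set ring) \<Longrightarrow> starA (starA X) = X"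
  by (erule AG_carrierE) (simp add: starA_pi)

lemma starA_add: "X \<in> carrier (AG :: ('g \<Rightarrow> 'k) set ring) \<Longrightarrow> Y \<in> carrier AG \<Longrightarrow>
   starA (X \<oplus>\<^bsub>AG\<^esub> Y) = starA X \<oplus>\<^bsub>AG\<^esub> starA Y"
  apply (erule AG_carrierE, erule AG_carrierE)
  apply (simp only: pi_add[symmetric] starA_pi star_carrier)
  apply (simp only: star_plus' pi_add[symmetric] star_carrier)
  done

lemma starA_mult: "X \<in> carrier (AG :: ('g \<Rightarrow> 'k) set ring) \<Longrightarrow> Y \<in> carrier AG \<Longrightarrow>
   starA (X \<otimes>\<^bsub>AG\<^esub> Y) = starA Y \<otimes>\<^bsub>AG\<^esub> starA X"
  apply (erule AG_carrierE, erule AG_carrierE)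
  apply (simp only: pi_mult[symmetric] starA_pi star_carrier)
  apply (simp only: star_mult pi_mult[symmetric] star_carrier)
  done

lemma starA_one: "starA (\<one>\<^bsub>AG\<^esub>) = (\<one>\<^bsub>AG\<^esub> :: ('g \<Rightarrow> 'k) set)"
  by (simp only: pi_one[symmetric] starA_pi star_one)

lemma starA_zero: "starA (\<zero>\<^bsub>AG\<^esub>) = (\<zero>\<^bsub>AG\<^esub> :: ('g \<Rightarrow> 'k) set)"
  by (simp add: AG_def FactRing_def starA_def star_image_commIdeal)

lemma starA_uminus: "X \<in> carrier (AG :: ('g \<Rightarrow> 'k) set ring) \<Longrightarrow>
   starA (\<ominus>\<^bsub>AG\<^esub> X) = \<ominus>\<^bsub>AG\<^esub> starA X"
proof -
  assume X: "X \<in> carrier (AG :: ('g \<Rightarrow> 'k) set ring)"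
  interpret R: ring "AG :: ('g \<Rightarrow> 'k) set ring" by (rule ring_AG)
  have "starA (\<ominus>\<^bsub>AG\<^esub> X) \<oplus>\<^bsub>AG\<^esub> starA X = \<zero>\<^bsub>AG\<^esub>"
    using X by (simp only: starA_add[symmetric] R.a_inv_closed R.l_neg starA_zero)
  then show ?thesis
    using X by (intro R.minus_equality[symmetric]) (simp_all add: starA_carrier)
qed

lemma starA_minus: "X \<in> carrier (AG :: ('g \<Rightarrow> 'k) set ring) \<Longrightarrow> Y \<in> carrier AG \<Longrightarrow>
   starA (X \<ominus>\<^bsub>AG\<^esub> Y) = starA X \<ominus>\<^bsub>AG\<^esub> starA Y"
proof -
  assume X: "X \<in> carrier (AG :: ('g \<Rightarrow> 'k) set ring)" and Y: "Y \<in> carrier AG"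
  interpret R: ring "AG :: ('g \<Rightarrow> 'k) set ring" by (rule ring_AG)
  show ?thesis using X Y by (simp add: R.minus_eq starA_add starA_uminus)
qed

lemma central:
  assumes X: "X \<in> carrier (AG :: ('g \<Rightarrow> 'k) set ring)" and XX: "starA X = X"
    and Y: "Y \<in> carrier AG"
  shows "X \<otimes>\<^bsub>AG\<^esub> Y = Y \<otimes>\<^bsub>AG\<^esub> X"
proof -
  interpret CI: ideal "commIdeal :: ('g \<Rightarrow> 'k) set" grpalg by (rule commIdeal_ideal)
  obtain a where a: "a \<in> carrier grpalg" "X = pi a" using X by (rule AG_carrierE)
  obtain c where c: "c \<in> carrier grpalg" "Y = pi c" using Y by (rule AG_carrierE)
  have sa: "star a \<in> carrier grpalg" using a by (simp only: star_carrier)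
  have "pi (star a) = pi a" using XX a by (simp add: starA_pi)
  then have d: "star a \<ominus>\<^bsub>grpalg\<^esub> a \<in> commIdeal" by (rule pi_eqD[OF sa a(1)])
  define b where "b = (\<lambda>x. (a x + a (- x)) / 2)"
  have "b \<ominus>\<^bsub>grpalg\<^esub> a = sc (1/2) \<otimes>\<^bsub>grpalg\<^esub> (star a \<ominus>\<^bsub>grpalg\<^esub> a)"
  proof -
    have bc: "b \<in> carrier grpalg"
      proof -
      have "finite (gsupp b)"
        by (rule finite_subset[of _ "gsupp a \<union> gsupp (star a)"])
           (use a sa in \<open>auto simp: gsupp_def b_def star_def\<close>)
      then show ?thesis by simp
    qed
    show ?thesis using a sa bc
      by (simp add: grpalg_diff conv_sc del: grpalg_simps)
         (simp add: b_def star_def fun_eq_iff field_simps conv_sc)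
  qed
  moreover have "sc (1/2) \<otimes>\<^bsub>grpalg\<^esub> (star a \<ominus>\<^bsub>grpalg\<^esub> a) \<in> commIdeal"
    by (rule CI.I_l_closed[OF d sc_carrier])
  ultimately have bI: "b \<ominus>\<^bsub>grpalg\<^esub> a \<in> commIdeal" by simp
  have bc: "b \<in> carrier grpalg"
  proof -
    have "finite (gsupp b)"
      by (rule finite_subset[of _ "gsupp a \<union> gsupp (star a)"])
         (use a sa in \<open>auto simp: gsupp_def b_def star_def\<close>)
    then show ?thesis by simp
  qed
  have sb: "star b = b" by (simp add: b_def star_def fun_eq_iff add.commute)
  have Xb: "X = pi b" using pi_eqI[OF bc a(1) bI] a by simp
  have "c \<otimes>\<^bsub>grpalg\<^esub> b \<ominus>\<^bsub>grpalg\<^esub> b \<otimes>\<^bsub>grpalg\<^esub> c \<in> commIdeal"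
    by (rule gens_in) (unfold gens_def, use bc c sb in blast)
  then have "pi (c \<otimes>\<^bsub>grpalg\<^esub> b) = pi (b \<otimes>\<^bsub>grpalg\<^esub> c)"
    by (rule pi_eqI[rotated 2]) (use bc c in \<open>simp_all del: grpalg_simps\<close>)
  then show ?thesis using Xb c bc by (simp add: pi_mult del: grpalg_simps)
qed


lemma halfA_pi: "halfA = pi (sc (1/2) :: 'g \<Rightarrow> 'k)"
  by (simp add: halfA_def sc_def)

lemma halfA_carrier: "(halfA :: ('g \<Rightarrow> 'k) set) \<in> carrier AG"
  by (simp only: halfA_pi pi_carrier sc_carrier)

lemma starA_halfA: "starA (halfA :: ('g \<Rightarrow> 'k) set) = halfA"
  by (simp only: halfA_pi starA_pi star_sc)

lemma halfA_add: "halfA \<oplus>\<^bsub>AG\<^esub> halfA = (\<one>\<^bsub>AG\<^esub> :: ('g \<Rightarrow> 'k) set)"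
proof -
  have "sc (1/2) \<oplus>\<^bsub>grpalg\<^esub> sc (1/2) = (\<one>\<^bsub>grpalg\<^esub> :: 'g \<Rightarrow> 'k)"
    by (simp add: sc_def delta_def fun_eq_iff)
  then show ?thesis
    by (simp only: halfA_pi pi_add[symmetric] sc_carrier pi_one)
qed

lemma grpA_pi: "grpA l = pi (delta l :: 'g \<Rightarrow> 'k)"
  by (simp add: grpA_def)

lemma grpA_carrier: "(grpA l :: ('g \<Rightarrow> 'k) set) \<in> carrier AG"
  by (simp only: grpA_pi pi_carrier delta_carrier)

lemma starA_grpA: "starA (grpA l :: ('g \<Rightarrow> 'k) set) = grpA (- l)"
  by (simp only: grpA_pi starA_pi star_delta)

lemma grpA_mult: "grpA a \<otimes>\<^bsub>AG\<^esub> grpA b = (grpA (a + b) :: ('g \<Rightarrow> 'k) set)"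
  by (simp only: grpA_pi pi_mult[symmetric] delta_carrier) (simp add: conv_delta)

lemma grpA_zero: "grpA 0 = (\<one>\<^bsub>AG\<^esub> :: ('g \<Rightarrow> 'k) set)"
  by (simp add: grpA_pi pi_one[symmetric])

definition Sset :: "('g \<Rightarrow> 'k) set set" where
  "Sset = {X \<in> carrier AG. starA X = X}"

lemma sharpRing_eq: "(sharpRing :: ('g \<Rightarrow> 'k) set ring) = AG \<lparr> carrier := Sset \<rparr>"
  by (simp add: sharpRing_def Sset_def)

lemma subring_S: "subring Sset (AG :: ('g \<Rightarrow> 'k) set ring)"
proof -
  interpret R: ring "AG :: ('g \<Rightarrow> 'k) set ring" by (rule ring_AG)
  show ?thesis
  proof (rule R.subringI)
    show "Sset \<subseteq> carrier AG" by (auto simp: Sset_def)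
    show "\<one>\<^bsub>AG\<^esub> \<in> Sset" by (simp add: Sset_def starA_one)
  next
    fix X assume "X \<in> Sset" then show "\<ominus>\<^bsub>AG\<^esub> X \<in> Sset"
      by (simp add: Sset_def starA_uminus)
  next
    fix X Y assume "X \<in> Sset" "Y \<in> Sset" then show "X \<otimes>\<^bsub>AG\<^esub> Y \<in> Sset"
      by (simp add: Sset_def starA_mult central)
  next
    fix X Y assume "X \<in> Sset" "Y \<in> Sset" then show "X \<oplus>\<^bsub>AG\<^esub> Y \<in> Sset"
      by (simp add: Sset_def starA_add)
  qed
qed

lemma cring_sharp: "cring (sharpRing :: ('g \<Rightarrow> 'k) set ring)"
proof -
  interpret R: ring "AG :: ('g \<Rightarrow> 'k) set ring" by (rule ring_AG)
  have "subcring Sset (AG :: ('g \<Rightarrow> 'k) set ring)"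
    by (rule R.subcringI[OF subring_S]) (auto simp: Sset_def central)
  then show ?thesis unfolding sharpRing_eq
    by (subst R.subcring_iff[symmetric]) (auto simp: Sset_def)
qed

end


context
  fixes TY :: "'g::group_add \<Rightarrow> 'k::field_char_0"
begin

lemma barA_S: "X \<in> carrier (AG :: ('g \<Rightarrow> 'k) set ring) \<Longrightarrow> barA X \<in> Sset"
proof -
  assume X: "X \<in> carrier (AG :: ('g \<Rightarrow> 'k) set ring)"
  interpret R: ring "AG :: ('g \<Rightarrow> 'k) set ring" by (rule ring_AG)
  have sX: "starA X \<in> carrier AG" using X by (rule starA_carrier)
  have c: "barA X \<in> carrier AG" unfolding barA_def using X sX halfA_carrier
    by (intro R.m_closed R.a_closed)
  have "starA (barA X) = (starA X \<oplus>\<^bsub>AG\<^esub> X) \<otimes>\<^bsub>AG\<^esub> halfA"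
    unfolding barA_def using X sX halfA_carrier
    by (simp only: starA_mult[OF halfA_carrier R.a_closed[OF X sX]] starA_add[OF X sX] starA_starA[OF X] starA_halfA)
  also have "\<dots> = halfA \<otimes>\<^bsub>AG\<^esub> (starA X \<oplus>\<^bsub>AG\<^esub> X)"
    using X sX halfA_carrier by (intro central[symmetric]) (simp_all add: starA_halfA)
  also have "\<dots> = barA X" unfolding barA_def using X sX by (simp add: R.a_comm)
  finally show ?thesis using c by (simp add: Sset_def)
qed

lemma barA_one: "barA (\<one>\<^bsub>AG\<^esub>) = (\<one>\<^bsub>AG\<^esub> :: ('g \<Rightarrow> 'k) set)"
proof -
  interpret R: ring "AG :: ('g \<Rightarrow> 'k) set ring" by (rule ring_AG)
  have "halfA \<otimes>\<^bsub>AG\<^esub> (\<one>\<^bsub>AG\<^esub> \<oplus>\<^bsub>AG\<^esub> \<one>\<^bsub>AG\<^esub>) = halfA \<otimes>\<^bsub>AG\<^esub> \<one>\<^bsub>AG\<^esub> \<oplus>\<^bsub>AG\<^esub> halfA \<otimes>\<^bsub>AG\<^esub> (\<one>\<^bsub>AG\<^esub> :: ('g \<Rightarrow> 'k) set)"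
    by (rule R.r_distr) (simp_all add: halfA_carrier)
  then show ?thesis unfolding barA_def starA_one using halfA_carrier
    by (simp only: halfA_add R.r_one[OF halfA_carrier])
qed

lemma key:
  assumes X: "X \<in> carrier (AG :: ('g \<Rightarrow> 'k) set ring)"
  shows "halfA \<otimes>\<^bsub>AG\<^esub> (barA (X \<otimes>\<^bsub>AG\<^esub> grpA l) \<oplus>\<^bsub>AG\<^esub> barA (X \<otimes>\<^bsub>AG\<^esub> grpA (- l)))
         = barA (grpA l) \<otimes>\<^bsub>AG\<^esub> barA X"
proof -
  interpret R: ring "AG :: ('g \<Rightarrow> 'k) set ring" by (rule ring_AG)
  define g where "g = (grpA l :: ('g \<Rightarrow> 'k) set)"
  define g' where "g' = (grpA (- l) :: ('g \<Rightarrow> 'k) set)"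
  define h where "h = (halfA :: ('g \<Rightarrow> 'k) set)"
  define Xs where "Xs = starA X"
  define c where "c = g \<oplus>\<^bsub>AG\<^esub> g'"
  have gc: "g \<in> carrier AG" "g' \<in> carrier AG" "h \<in> carrier AG" "Xs \<in> carrier AG"
    unfolding g_def g'_def h_def Xs_def using X
    by (simp_all add: grpA_carrier halfA_carrier starA_carrier)
  have cc: "c \<in> carrier AG" using gc by (simp add: c_def)
  have sg: "starA g = g'" "starA g' = g" by (simp_all add: g_def g'_def starA_grpA)
  have sc': "starA c = c" unfolding c_def using gc sg by (simp add: starA_add R.a_comm)
  have sh: "starA h = h" by (simp add: h_def starA_halfA)
  have cX: "X \<otimes>\<^bsub>AG\<^esub> c = c \<otimes>\<^bsub>AG\<^esub> X" using central[OF cc sc' X] by simp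
  have ch: "c \<otimes>\<^bsub>AG\<^esub> h = h \<otimes>\<^bsub>AG\<^esub> c" using central[OF gc(3) sh cc] by simp
  have b1: "barA (X \<otimes>\<^bsub>AG\<^esub> g) = h \<otimes>\<^bsub>AG\<^esub> (X \<otimes>\<^bsub>AG\<^esub> g \<oplus>\<^bsub>AG\<^esub> g' \<otimes>\<^bsub>AG\<^esub> Xs)"
    unfolding barA_def h_def Xs_def using X gc by (simp add: starA_mult sg)
  have b2: "barA (X \<otimes>\<^bsub>AG\<^esub> g') = h \<otimes>\<^bsub>AG\<^esub> (X \<otimes>\<^bsub>AG\<^esub> g' \<oplus>\<^bsub>AG\<^esub> g \<otimes>\<^bsub>AG\<^esub> Xs)"
    unfolding barA_def h_def Xs_def using X gc by (simp add: starA_mult sg)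
  have b3: "barA g = h \<otimes>\<^bsub>AG\<^esub> c" unfolding barA_def h_def c_def by (simp add: sg)
  have b4: "barA X = h \<otimes>\<^bsub>AG\<^esub> (X \<oplus>\<^bsub>AG\<^esub> Xs)" unfolding barA_def h_def Xs_def ..
  have "h \<otimes>\<^bsub>AG\<^esub> (barA (X \<otimes>\<^bsub>AG\<^esub> g) \<oplus>\<^bsub>AG\<^esub> barA (X \<otimes>\<^bsub>AG\<^esub> g'))
      = h \<otimes>\<^bsub>AG\<^esub> (h \<otimes>\<^bsub>AG\<^esub> (X \<otimes>\<^bsub>AG\<^esub> c \<oplus>\<^bsub>AG\<^esub> c \<otimes>\<^bsub>AG\<^esub> Xs))"
    unfolding b1 b2 c_def using X gc by algebra
  also have "\<dots> = h \<otimes>\<^bsub>AG\<^esub> (h \<otimes>\<^bsub>AG\<^esub> (c \<otimes>\<^bsub>AG\<^esub> (X \<oplus>\<^bsub>AG\<^esub> Xs)))"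
    using X gc cc by (simp add: cX R.r_distr)
  also have "\<dots> = (h \<otimes>\<^bsub>AG\<^esub> c) \<otimes>\<^bsub>AG\<^esub> (h \<otimes>\<^bsub>AG\<^esub> (X \<oplus>\<^bsub>AG\<^esub> Xs))"
  proof -
    have "c \<otimes>\<^bsub>AG\<^esub> (h \<otimes>\<^bsub>AG\<^esub> (X \<oplus>\<^bsub>AG\<^esub> Xs)) = h \<otimes>\<^bsub>AG\<^esub> (c \<otimes>\<^bsub>AG\<^esub> (X \<oplus>\<^bsub>AG\<^esub> Xs))"
      using X gc cc by (simp add: R.m_assoc[symmetric] ch)
    then show ?thesis using X gc cc by (simp add: R.m_assoc)
  qed
  finally have r: "h \<otimes>\<^bsub>AG\<^esub> (barA (X \<otimes>\<^bsub>AG\<^esub> g) \<oplus>\<^bsub>AG\<^esub> barA (X \<otimes>\<^bsub>AG\<^esub> g'))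
      = (h \<otimes>\<^bsub>AG\<^esub> c) \<otimes>\<^bsub>AG\<^esub> (h \<otimes>\<^bsub>AG\<^esub> (X \<oplus>\<^bsub>AG\<^esub> Xs))" .
  show ?thesis using r[folded b3 b4] unfolding g_def g'_def h_def .
qed


lemma minus_S:
  assumes a: "a \<in> Sset" and b: "b \<in> Sset"
  shows "a \<ominus>\<^bsub>AG\<^esub> b = a \<ominus>\<^bsub>sharpRing\<^esub> (b :: ('g \<Rightarrow> 'k) set)"
proof -
  interpret R: ring "AG :: ('g \<Rightarrow> 'k) set ring" by (rule ring_AG)
  interpret S: cring "sharpRing :: ('g \<Rightarrow> 'k) set ring" by (rule cring_sharp)
  have bc: "b \<in> carrier AG" using b by (simp add: Sset_def)
  have nb: "\<ominus>\<^bsub>AG\<^esub> b \<in> Sset" using b bc by (simp add: Sset_def starA_uminus)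
  have "\<ominus>\<^bsub>sharpRing\<^esub> b = \<ominus>\<^bsub>AG\<^esub> b"
    by (rule S.minus_equality) (use b nb bc in \<open>simp_all add: sharpRing_eq R.l_neg\<close>)
  then show ?thesis by (simp add: a_minus_def sharpRing_eq)
qed

lemma main_lemma:
  "(Lsharp L :: ('g \<Rightarrow> 'k) set set) = Lsharpsharp L <+>\<^bsub>sharpRing\<^esub> Lbullet L"
proof -
  interpret R: ring "AG :: ('g \<Rightarrow> 'k) set ring" by (rule ring_AG)
  interpret S: cring "sharpRing :: ('g \<Rightarrow> 'k) set ring" by (rule cring_sharp)
  have cS: "carrier (sharpRing :: ('g \<Rightarrow> 'k) set ring) = Sset" by (simp add: sharpRing_eq)
  have opS: "add sharpRing = add (AG :: ('g \<Rightarrow> 'k) set ring)"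
    "mult sharpRing = mult (AG :: ('g \<Rightarrow> 'k) set ring)"
    "one sharpRing = one (AG :: ('g \<Rightarrow> 'k) set ring)"
    "zero sharpRing = zero (AG :: ('g \<Rightarrow> 'k) set ring)"
    by (simp_all add: sharpRing_eq)
  define G1 where "G1 = {barA (x \<otimes>\<^bsub>AG\<^esub> grpA l) \<ominus>\<^bsub>AG\<^esub> barA x | x l. x \<in> carrier (AG :: ('g \<Rightarrow> 'k) set ring) \<and> l \<in> L}"
  define G2 where "G2 = {barA (x \<otimes>\<^bsub>AG\<^esub> grpA l) \<ominus>\<^bsub>AG\<^esub> barA (x \<otimes>\<^bsub>AG\<^esub> grpA (- l)) | x l.
        x \<in> carrier (AG :: ('g \<Rightarrow> 'k) set ring) \<and> l \<in> L}"
  define G3 where "G3 = {\<one>\<^bsub>AG :: ('g \<Rightarrow> 'k) set ring\<^esub> \<ominus>\<^bsub>AG\<^esub> barA (grpA l) | l. l \<in> L}"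
  have L1: "Lsharp L = Idl\<^bsub>sharpRing\<^esub> G1" unfolding Lsharp_def G1_def ..
  have L2: "Lsharpsharp L = Idl\<^bsub>sharpRing\<^esub> G2" unfolding Lsharpsharp_def G2_def ..
  have L3: "Lbullet L = Idl\<^bsub>sharpRing\<^esub> G3" unfolding Lbullet_def G3_def ..
  have bS: "x \<in> carrier AG \<Longrightarrow> barA x \<in> carrier sharpRing" for x :: "('g \<Rightarrow> 'k) set"
    using barA_S cS by blast
  have xg: "x \<in> carrier AG \<Longrightarrow> x \<otimes>\<^bsub>AG\<^esub> grpA l \<in> carrier AG" for x :: "('g \<Rightarrow> 'k) set" and l
    using grpA_carrier by (intro R.m_closed)
  have gS: "(grpA l :: ('g \<Rightarrow> 'k) set) \<in> carrier AG" for l using grpA_carrier .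
  have mS: "a \<in> carrier sharpRing \<Longrightarrow> b \<in> carrier sharpRing \<Longrightarrow> a \<ominus>\<^bsub>AG\<^esub> b = a \<ominus>\<^bsub>sharpRing\<^esub> b"
    for a b :: "('g \<Rightarrow> 'k) set" using minus_S cS by blast
  have oneS: "\<one>\<^bsub>AG\<^esub> = (\<one>\<^bsub>sharpRing\<^esub> :: ('g \<Rightarrow> 'k) set)" using opS by simp
  have hS: "halfA \<in> carrier (sharpRing :: ('g \<Rightarrow> 'k) set ring)"
    using cS halfA_carrier starA_halfA by (simp add: Sset_def)
  have G1S: "G1 \<subseteq> carrier sharpRing" unfolding G1_def using bS xg by (auto simp: mS)
  have G2S: "G2 \<subseteq> carrier sharpRing" unfolding G2_def using bS xg by (auto simp: mS)
  have G3S: "G3 \<subseteq> carrier sharpRing" unfolding G3_def using bS gS by (auto simp: mS oneS)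
  have I1: "ideal (Idl\<^bsub>sharpRing\<^esub> G1) sharpRing" by (rule S.genideal_ideal[OF G1S])
  have I2: "ideal (Idl\<^bsub>sharpRing\<^esub> G2) sharpRing" by (rule S.genideal_ideal[OF G2S])
  have I3: "ideal (Idl\<^bsub>sharpRing\<^esub> G3) sharpRing" by (rule S.genideal_ideal[OF G3S])
  have G1I: "G1 \<subseteq> Idl\<^bsub>sharpRing\<^esub> G1" by (rule S.genideal_self[OF G1S])
  have G2I: "G2 \<subseteq> Idl\<^bsub>sharpRing\<^esub> G2" by (rule S.genideal_self[OF G2S])
  have G3I: "G3 \<subseteq> Idl\<^bsub>sharpRing\<^esub> G3" by (rule S.genideal_self[OF G3S])
  have sub1: "G1 \<subseteq> Idl\<^bsub>sharpRing\<^esub> G2 <+>\<^bsub>sharpRing\<^esub> Idl\<^bsub>sharpRing\<^esub> G3"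
  proof
    fix u assume "u \<in> G1"
    then obtain x l where x: "x \<in> carrier AG" "l \<in> L"
      and u: "u = barA (x \<otimes>\<^bsub>AG\<^esub> grpA l) \<ominus>\<^bsub>AG\<^esub> barA x" unfolding G1_def by blast
    define P where "P = barA (x \<otimes>\<^bsub>AG\<^esub> grpA l)"
    define Q where "Q = barA (x \<otimes>\<^bsub>AG\<^esub> grpA (- l))"
    define B where "B = barA x"
    define C where "C = barA (grpA l :: ('g \<Rightarrow> 'k) set)"
    define h where "h = (halfA :: ('g \<Rightarrow> 'k) set)"
    have c: "P \<in> carrier sharpRing" "Q \<in> carrier sharpRing" "B \<in> carrier sharpRing"
      "C \<in> carrier sharpRing" "h \<in> carrier sharpRing"
      unfolding P_def Q_def B_def C_def h_def using x xg gS bS hS by auto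
    have K: "h \<otimes>\<^bsub>sharpRing\<^esub> (P \<oplus>\<^bsub>sharpRing\<^esub> Q) = C \<otimes>\<^bsub>sharpRing\<^esub> B"
      unfolding opS P_def Q_def B_def C_def h_def by (rule key[OF x(1)])
    have hh: "h \<oplus>\<^bsub>sharpRing\<^esub> h = \<one>\<^bsub>sharpRing\<^esub>"
      unfolding opS h_def by (rule halfA_add)
    have v: "P \<ominus>\<^bsub>sharpRing\<^esub> Q \<in> Idl\<^bsub>sharpRing\<^esub> G2"
    proof -
      have "P \<ominus>\<^bsub>AG\<^esub> Q \<in> G2" unfolding G2_def P_def Q_def using x by blast
      then show ?thesis using G2I mS c by auto
    qed
    have w: "\<one>\<^bsub>sharpRing\<^esub> \<ominus>\<^bsub>sharpRing\<^esub> C \<in> Idl\<^bsub>sharpRing\<^esub> G3"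
    proof -
      have "\<one>\<^bsub>AG\<^esub> \<ominus>\<^bsub>AG\<^esub> C \<in> G3" unfolding G3_def C_def using x by blast
      then show ?thesis using G3I mS c oneS S.one_closed by auto
    qed
    have hv: "h \<otimes>\<^bsub>sharpRing\<^esub> (P \<ominus>\<^bsub>sharpRing\<^esub> Q) \<in> Idl\<^bsub>sharpRing\<^esub> G2"
      by (rule ideal.I_l_closed[OF I2 v c(5)])
    have wB: "\<ominus>\<^bsub>sharpRing\<^esub> ((\<one>\<^bsub>sharpRing\<^esub> \<ominus>\<^bsub>sharpRing\<^esub> C) \<otimes>\<^bsub>sharpRing\<^esub> B) \<in> Idl\<^bsub>sharpRing\<^esub> G3"
      by (rule additive_subgroup.a_inv_closed[OF ideal.axioms(1)[OF I3] ideal.I_r_closed[OF I3 w c(3)]])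
    have e1: "(\<one>\<^bsub>sharpRing\<^esub> \<ominus>\<^bsub>sharpRing\<^esub> C) \<otimes>\<^bsub>sharpRing\<^esub> B = B \<ominus>\<^bsub>sharpRing\<^esub> C \<otimes>\<^bsub>sharpRing\<^esub> B"
    proof -
      have "(\<one>\<^bsub>sharpRing\<^esub> \<ominus>\<^bsub>sharpRing\<^esub> C) \<otimes>\<^bsub>sharpRing\<^esub> B = \<one>\<^bsub>sharpRing\<^esub> \<otimes>\<^bsub>sharpRing\<^esub> B \<ominus>\<^bsub>sharpRing\<^esub> C \<otimes>\<^bsub>sharpRing\<^esub> B"
        using c by algebra
      then show ?thesis using c by (simp only: S.l_one)
    qed
    have e2: "h \<otimes>\<^bsub>sharpRing\<^esub> (P \<ominus>\<^bsub>sharpRing\<^esub> Q) \<oplus>\<^bsub>sharpRing\<^esub> \<ominus>\<^bsub>sharpRing\<^esub> (B \<ominus>\<^bsub>sharpRing\<^esub> h \<otimes>\<^bsub>sharpRing\<^esub> (P \<oplus>\<^bsub>sharpRing\<^esub> Q))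
       = (h \<oplus>\<^bsub>sharpRing\<^esub> h) \<otimes>\<^bsub>sharpRing\<^esub> P \<ominus>\<^bsub>sharpRing\<^esub> B"
      using c by algebra
    have eq: "u = h \<otimes>\<^bsub>sharpRing\<^esub> (P \<ominus>\<^bsub>sharpRing\<^esub> Q) \<oplus>\<^bsub>sharpRing\<^esub> \<ominus>\<^bsub>sharpRing\<^esub> ((\<one>\<^bsub>sharpRing\<^esub> \<ominus>\<^bsub>sharpRing\<^esub> C) \<otimes>\<^bsub>sharpRing\<^esub> B)"
      unfolding e1 K[symmetric] e2 hh using c u mS[of P B] P_def B_def by simp
    show "u \<in> Idl\<^bsub>sharpRing\<^esub> G2 <+>\<^bsub>sharpRing\<^esub> Idl\<^bsub>sharpRing\<^esub> G3"
      using hv wB eq unfolding set_add_defs by auto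
  qed
  have inc1: "Idl\<^bsub>sharpRing\<^esub> G1 \<subseteq> Idl\<^bsub>sharpRing\<^esub> G2 <+>\<^bsub>sharpRing\<^esub> Idl\<^bsub>sharpRing\<^esub> G3"
    by (rule S.genideal_minimal[OF S.add_ideals[OF I2 I3] sub1])
  have sub2: "G2 \<subseteq> Idl\<^bsub>sharpRing\<^esub> G1"
  proof
    fix v assume "v \<in> G2"
    then obtain x l where x: "x \<in> carrier AG" "l \<in> L"
      and v: "v = barA (x \<otimes>\<^bsub>AG\<^esub> grpA l) \<ominus>\<^bsub>AG\<^esub> barA (x \<otimes>\<^bsub>AG\<^esub> grpA (- l))" unfolding G2_def by blast
    define x' where "x' = x \<otimes>\<^bsub>AG\<^esub> grpA (- l)"
    have x': "x' \<in> carrier AG" unfolding x'_def using x xg by blast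
    have x'g: "x' \<otimes>\<^bsub>AG\<^esub> grpA l = x"
      unfolding x'_def using x gS by (simp add: R.m_assoc grpA_mult grpA_zero)
    define P where "P = barA (x \<otimes>\<^bsub>AG\<^esub> grpA l)"
    define Q where "Q = barA x'"
    define B where "B = barA x"
    have c: "P \<in> carrier sharpRing" "Q \<in> carrier sharpRing" "B \<in> carrier sharpRing"
      unfolding P_def Q_def B_def using x x' xg bS by auto
    have a1: "P \<ominus>\<^bsub>sharpRing\<^esub> B \<in> Idl\<^bsub>sharpRing\<^esub> G1"
    proof -
      have "P \<ominus>\<^bsub>AG\<^esub> B \<in> G1" unfolding G1_def P_def B_def using x by blast
      then show ?thesis using G1I mS c by auto
    qed
    have a2: "B \<ominus>\<^bsub>sharpRing\<^esub> Q \<in> Idl\<^bsub>sharpRing\<^esub> G1"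
    proof -
      have "barA (x' \<otimes>\<^bsub>AG\<^esub> grpA l) \<ominus>\<^bsub>AG\<^esub> barA x' \<in> G1" unfolding G1_def using x x' by blast
      then show ?thesis unfolding x'g using G1I mS c by (auto simp: B_def Q_def)
    qed
    have "P \<ominus>\<^bsub>sharpRing\<^esub> B \<oplus>\<^bsub>sharpRing\<^esub> (B \<ominus>\<^bsub>sharpRing\<^esub> Q) \<in> Idl\<^bsub>sharpRing\<^esub> G1"
      by (rule additive_subgroup.a_closed[OF ideal.axioms(1)[OF I1] a1 a2])
    moreover have "P \<ominus>\<^bsub>sharpRing\<^esub> B \<oplus>\<^bsub>sharpRing\<^esub> (B \<ominus>\<^bsub>sharpRing\<^esub> Q) = P \<ominus>\<^bsub>sharpRing\<^esub> Q"
      using c by algebra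
    moreover have "v = P \<ominus>\<^bsub>sharpRing\<^esub> Q" unfolding v P_def Q_def x'_def using mS c
      by (simp add: P_def Q_def x'_def)
    ultimately show "v \<in> Idl\<^bsub>sharpRing\<^esub> G1" by simp
  qed
  have sub3: "G3 \<subseteq> Idl\<^bsub>sharpRing\<^esub> G1"
  proof
    fix w assume "w \<in> G3"
    then obtain l where l: "l \<in> L" and w: "w = \<one>\<^bsub>AG\<^esub> \<ominus>\<^bsub>AG\<^esub> barA (grpA l)" unfolding G3_def by blast
    define C where "C = barA (grpA l :: ('g \<Rightarrow> 'k) set)"
    have c: "C \<in> carrier sharpRing" unfolding C_def using gS bS by auto
    have "barA (\<one>\<^bsub>AG\<^esub> \<otimes>\<^bsub>AG\<^esub> grpA l) \<ominus>\<^bsub>AG\<^esub> barA \<one>\<^bsub>AG\<^esub> \<in> G1" unfolding G1_def using l by blast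
    moreover have "barA (\<one>\<^bsub>AG\<^esub> \<otimes>\<^bsub>AG\<^esub> grpA l) \<ominus>\<^bsub>AG\<^esub> barA \<one>\<^bsub>AG\<^esub> = C \<ominus>\<^bsub>sharpRing\<^esub> \<one>\<^bsub>sharpRing\<^esub>"
    proof -
      have "barA (\<one>\<^bsub>AG\<^esub> \<otimes>\<^bsub>AG\<^esub> grpA l) \<ominus>\<^bsub>AG\<^esub> barA \<one>\<^bsub>AG\<^esub> = C \<ominus>\<^bsub>AG\<^esub> \<one>\<^bsub>AG\<^esub>"
        by (simp only: C_def R.l_one[OF gS] barA_one)
      also have "\<dots> = C \<ominus>\<^bsub>sharpRing\<^esub> \<one>\<^bsub>sharpRing\<^esub>"
        unfolding oneS by (rule mS[OF c S.one_closed])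
      finally show ?thesis .
    qed
    ultimately have "C \<ominus>\<^bsub>sharpRing\<^esub> \<one>\<^bsub>sharpRing\<^esub> \<in> Idl\<^bsub>sharpRing\<^esub> G1"
      using G1I by auto
    then have "\<ominus>\<^bsub>sharpRing\<^esub> (C \<ominus>\<^bsub>sharpRing\<^esub> \<one>\<^bsub>sharpRing\<^esub>) \<in> Idl\<^bsub>sharpRing\<^esub> G1"
      by (rule additive_subgroup.a_inv_closed[OF ideal.axioms(1)[OF I1]])
    moreover have "\<ominus>\<^bsub>sharpRing\<^esub> (C \<ominus>\<^bsub>sharpRing\<^esub> \<one>\<^bsub>sharpRing\<^esub>) = \<one>\<^bsub>sharpRing\<^esub> \<ominus>\<^bsub>sharpRing\<^esub> C"
      using c by algebra
    moreover have "w = \<one>\<^bsub>sharpRing\<^esub> \<ominus>\<^bsub>sharpRing\<^esub> C" unfolding w C_def using mS c oneS S.one_closed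
      by (simp add: C_def)
    ultimately show "w \<in> Idl\<^bsub>sharpRing\<^esub> G1" by simp
  qed
  have inc2: "Idl\<^bsub>sharpRing\<^esub> G2 \<subseteq> Idl\<^bsub>sharpRing\<^esub> G1" by (rule S.genideal_minimal[OF I1 sub2])
  have inc3: "Idl\<^bsub>sharpRing\<^esub> G3 \<subseteq> Idl\<^bsub>sharpRing\<^esub> G1" by (rule S.genideal_minimal[OF I1 sub3])
  have "Idl\<^bsub>sharpRing\<^esub> G2 <+>\<^bsub>sharpRing\<^esub> Idl\<^bsub>sharpRing\<^esub> G3 \<subseteq> Idl\<^bsub>sharpRing\<^esub> G1"
    using inc2 inc3 additive_subgroup.a_closed[OF ideal.axioms(1)[OF I1]]
    unfolding set_add_defs by force
  with inc1 show ?thesis unfolding L1 L2 L3 by blast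
qed

end

theorem mainTheorem5:
  fixes L :: "'g::group_add set"
  shows "(Lsharp L :: ('g \<Rightarrow> 'k::field_char_0) set set)
           = Lsharpsharp L <+>\<^bsub>sharpRing\<^esub> Lbullet L"
  by (rule main_lemma)

end
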